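(* Let $\mathbf{r}_1,\ldots,\mathbf{r}_m$ be duplicate-free temporal-probabilistic (TP) relations and let $Q$ be a non-repeating TP set query over them, i.e., an expression generated by the grammar $Q ::= \mathbf{r}_i \mid Q \cup^{Tp} Q \mid Q \cap^{Tp} Q \mid Q -^{Tp} Q \mid (Q)$ in which every input relation $\mathbf{r}_i$ occurs at most once. Then the lineage expression of every result tuple of $Q$ is in one-occurrence form (1OF), i.e., no tuple identifier occurs more than once in it.
   Context: A TP relation $\mathbf{r}$ with schema $(F,\lambda,T,p)$ is a finite set of tuples $r$, where $r.F=(A_1,\dots,A_m)$ is a tuple of ordinary attribute values (the "fact"), $r.\lambda$ is a lineage expression, $r.T=[T_s,T_e)$ is an interval over a finite ordered domain $\Omega^T$ of time points, and $r.p\in(0,1]$ is a probability. A lineage expression is a Boolean formula built from tuple identifiers with $\neg,\land,\lor$; for a base tuple $r$, $r.\lambda$ is the atomic formula consisting of its own identifier $r$ (identifiers are distinct across all base tuples). $\mathbf{r}$ is duplicate-free iff for all $r\neq r'$ in $\mathbf{r}$, $r.F\neq r'.F$ or $r.T\cap r'.T=\emptyset$. For a relation $\mathbf{r}$, fact $f$ and time point $t$, $\lambda^{\mathbf{r},f}_t$ denotes $r.\lambda$ if there is $r\in\mathbf{r}$ with $r.F=f$ and $t\in r.T$, and $\mathtt{null}$ otherwise. Lineage-concatenation functions: $\mathbf{and}(\lambda_1,\lambda_2)=(\lambda_1)\land(\lambda_2)$; $\mathbf{andNot}(\lambda_1,\lambda_2)=(\lambda_1)$ if $\lambda_2=\mathtt{null}$,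 else $(\lambda_1)\land\neg(\lambda_2)$; $\mathbf{or}(\lambda_1,\lambda_2)=(\lambda_1)$ if $\lambda_2=\mathtt{null}$, $(\lambda_2)$ if $\lambda_1=\mathtt{null}$, else $(\lambda_1)\lor(\lambda_2)$. TP set operations on relations $\mathbf{r},\mathbf{s}$ with the same schema (a result tuple $\tilde r$ has fact, lineage and interval; its probability is the probability of its lineage): $\tilde r\in\mathbf{r}\cup^{Tp}\mathbf{s}$ iff for all $t\in\tilde r.T$: ($\lambda^{\mathbf{r},\tilde r.F}_t\neq\mathtt{null}$ or $\lambda^{\mathbf{s},\tilde r.F}_t\neq\mathtt{null}$) and $\tilde r.\lambda\equiv\mathbf{or}(\lambda^{\mathbf{r},\tilde r.F}_t,\lambda^{\mathbf{s},\tilde r.F}_t)$; and for all $t'\notin\tilde r.T$: $\tilde r.\lambda\not\equiv\mathbf{or}(\lambda^{\mathbf{r},\tilde r.F}_{t'},\lambda^{\mathbf{s},\tilde r.F}_{t'})$. $\tilde r\in\mathbf{r}\cap^{Tp}\mathbf{s}$ iff for all $t\in\tilde r.T$: $\lambda^{\mathbf{r},\tilde r.F}_t\neq\mathtt{null}$, $\lambda^{\mathbf{s},\tilde r.F}_t\neq\mathtt{null}$ and $\tilde r.\lambda\equiv\mathbf{and}(\lambda^{\mathbf{r},\tilde r.F}_t,\lambda^{\mathbf{s},\tilde r.F}_t)$; and for all $t'\notin\tilde r.T$: $\tilde r.\lambda\not\equiv\mathbf{and}(\lambda^{\mathbf{r},\tilde r.F}_{t'},\lambda^{\mathbf{s},\tilde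 r.F}_{t'})$. $\tilde r\in\mathbf{r}-^{Tp}\mathbf{s}$ iff for all $t\in\tilde r.T$: $\lambda^{\mathbf{r},\tilde r.F}_t\neq\mathtt{null}$ and $\tilde r.\lambda\equiv\mathbf{andNot}(\lambda^{\mathbf{r},\tilde r.F}_t,\lambda^{\mathbf{s},\tilde r.F}_t)$; and for all $t'\notin\tilde r.T$: $\tilde r.\lambda\not\equiv\mathbf{andNot}(\lambda^{\mathbf{r},\tilde r.F}_{t'},\lambda^{\mathbf{s},\tilde r.F}_{t'})$. The result lineages are the formulas produced by the concatenation functions when applying the operations bottom-up in $Q$. *)

theory Defs
  imports Complex_Main
begin

text \<open>Lineage expressions: Boolean formulas over tuple identifiers.\<close>
datatype 'i lin = Var 'i | Neg "'i lin" | Conj "'i lin" "'i lin" | Disj "'i lin" "'i lin"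

fun occs :: "'i lin \<Rightarrow> 'i list" where
  "occs (Var x) = [x]"
| "occs (Neg a) = occs a"
| "occs (Conj a b) = occs a @ occs b"
| "occs (Disj a b) = occs a @ occs b"

definition one_occurrence_form :: "'i lin \<Rightarrow> bool" where
  "one_occurrence_form l \<longleftrightarrow> distinct (occs l)"

text \<open>Time points are natural numbers; an interval [Ts,Te) is a pair (Ts,Te).\<close>
definition ivl :: "nat \<times> nat \<Rightarrow> nat set" where
  "ivl T = {fst T..<snd T}"

text \<open>Base TP tuple: (identifier, fact, interval, probability); its lineage is Var identifier.\<close>
type_synonym ('i,'f) base_tuple = "'i \<times> 'f \<times> (nat \<times> nat) \<times> real"
text \<open>Tuple with lineage (fact, lineage, interval); probability is a function of the lineage.\<close>
type_synonym ('i,'f) ltuple = "'f \<times> 'i lin \<times> (nat \<times> nat)"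

definition b_id :: "('i,'f) base_tuple \<Rightarrow> 'i" where "b_id x = fst x"
definition b_fact :: "('i,'f) base_tuple \<Rightarrow> 'f" where "b_fact x = fst (snd x)"
definition b_T :: "('i,'f) base_tuple \<Rightarrow> nat \<times> nat" where "b_T x = fst (snd (snd x))"
definition b_p :: "('i,'f) base_tuple \<Rightarrow> real" where "b_p x = snd (snd (snd x))"

definition wf_base_rel :: "('i,'f) base_tuple set \<Rightarrow> bool" where
  "wf_base_rel r \<longleftrightarrow> finite r \<and>
     (\<forall>x\<in>r. fst (b_T x) < snd (b_T x) \<and> 0 < b_p x \<and> b_p x \<le> 1)"

definition duplicate_free :: "('i,'f) base_tuple set \<Rightarrow> bool" where
  "duplicate_free r \<longleftrightarrow>
     (\<forall>x\<in>r. \<forall>y\<in>r. x \<noteq> y \<longrightarrow> b_fact x \<noteq> b_fact y \<or> ivl (b_T x) \<inter> ivl (b_T y) = {})"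

text \<open>Lineage of a relation at fact f and time t (None = null).\<close>
definition lam :: "('i,'f) ltuple set \<Rightarrow> 'f \<Rightarrow> nat \<Rightarrow> 'i lin option" where
  "lam r f t = (if \<exists>x\<in>r. fst x = f \<and> t \<in> ivl (snd (snd x))
               then Some (fst (snd (SOME x. x \<in> r \<and> fst x = f \<and> t \<in> ivl (snd (snd x)))))
               else None)"

fun l_and :: "'i lin option \<Rightarrow> 'i lin option \<Rightarrow> 'i lin option" where
  "l_and (Some a) (Some b) = Some (Conj a b)"
| "l_and _ _ = None"

fun l_andNot :: "'i lin option \<Rightarrow> 'i lin option \<Rightarrow> 'i lin option" where
  "l_andNot (Some a) None = Some a"
| "l_andNot (Some a) (Some b) = Some (Conj a (Neg b))"
| "l_andNot None _ = None"

fun l_or :: "'i lin option \<Rightarrow> 'i lin option \<Rightarrow> 'i lin option" where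
  "l_or (Some a) None = Some a"
| "l_or None (Some b) = Some b"
| "l_or (Some a) (Some b) = Some (Disj a b)"
| "l_or None None = None"

text \<open>Generic TP set operation, parametrised by the non-null requirement and concatenation.\<close>
definition tp_op ::
  "('i lin option \<Rightarrow> 'i lin option \<Rightarrow> bool) \<Rightarrow>
   ('i lin option \<Rightarrow> 'i lin option \<Rightarrow> 'i lin option) \<Rightarrow>
   ('i,'f) ltuple set \<Rightarrow> ('i,'f) ltuple set \<Rightarrow> ('i,'f) ltuple set" where
  "tp_op nn conc r s = {(f, l, T). fst T < snd T \<and>
      (\<forall>t\<in>ivl T. nn (lam r f t) (lam s f t) \<and> Some l = conc (lam r f t) (lam s f t)) \<and>
      (\<forall>t'. t' \<notin> ivl T \<longrightarrow> Some l \<noteq> conc (lam r f t') (lam s f t'))}"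

definition tp_union where
  "tp_union = tp_op (\<lambda>a b. a \<noteq> None \<or> b \<noteq> None) l_or"
definition tp_inter where
  "tp_inter = tp_op (\<lambda>a b. a \<noteq> None \<and> b \<noteq> None) l_and"
definition tp_diff where
  "tp_diff = tp_op (\<lambda>a b. a \<noteq> None) l_andNot"

datatype query = Rel nat | QUnion query query | QInter query query | QDiff query query

fun rels :: "query \<Rightarrow> nat list" where
  "rels (Rel i) = [i]"
| "rels (QUnion a b) = rels a @ rels b"
| "rels (QInter a b) = rels a @ rels b"
| "rels (QDiff a b) = rels a @ rels b"

definition non_repeating :: "query \<Rightarrow> bool" where
  "non_repeating Q \<longleftrightarrow> distinct (rels Q)"

definition base_lin :: "('i,'f) base_tuple set \<Rightarrow> ('i,'f) ltuple set" where
  "base_lin r = {(b_fact x, Var (b_id x), b_T x) | x. x \<in> r}"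

fun eval :: "(nat \<Rightarrow> ('i,'f) base_tuple set) \<Rightarrow> query \<Rightarrow> ('i,'f) ltuple set" where
  "eval R (Rel i) = base_lin (R i)"
| "eval R (QUnion a b) = tp_union (eval R a) (eval R b)"
| "eval R (QInter a b) = tp_inter (eval R a) (eval R b)"
| "eval R (QDiff a b) = tp_diff (eval R a) (eval R b)"

end

theory Submission
  imports Defs
begin

lemma lam_some: "lam r f t = Some l \<Longrightarrow> \<exists>x\<in>r. fst (snd x) = l"
  unfolding lam_def
proof (cases "\<exists>x\<in>r. fst x = f \<and> t \<in> ivl (snd (snd x))")
  case True
  then have "\<exists>x. x \<in> r \<and> fst x = f \<and> t \<in> ivl (snd (snd x))" by blast
  from someI_ex[OF this]
  show "(if \<exists>x\<in>r. fst x = f \<and> t \<in> ivl (snd (snd x))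
         then Some (fst (snd (SOME x. x \<in> r \<and> fst x = f \<and> t \<in> ivl (snd (snd x))))) else None) = Some l
        \<Longrightarrow> \<exists>x\<in>r. fst (snd x) = l" using True by auto
qed simp

lemma tp_op_pt:
  assumes "x \<in> tp_op nn conc r s"
  shows "\<exists>t. Some (fst (snd x)) = conc (lam r (fst x) t) (lam s (fst x) t)"
proof -
  obtain f l T where x: "x = (f, l, T)" by (cases x) auto
  with assms have "fst T < snd T" and
    "\<forall>t\<in>ivl T. Some l = conc (lam r f t) (lam s f t)"
    unfolding tp_op_def by auto
  then have "Some l = conc (lam r f (fst T)) (lam s f (fst T))" unfolding ivl_def by auto
  then show ?thesis using x by auto
qed

definition I where "I R Q = (\<Union>i\<in>set (rels Q). b_id ` R i)"

definition good where "good S A = (\<forall>x\<in>S. distinct (occs (fst (snd x))) \<and> set (occs (fst (snd x))) \<subseteq> A)"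

lemma lam_good: "good S A \<Longrightarrow> lam S f t = Some l \<Longrightarrow> distinct (occs l) \<and> set (occs l) \<subseteq> A"
proof -
  assume g: "good S A" and h: "lam S f t = Some l"
  from lam_some[OF h] obtain x where x: "x \<in> S" "fst (snd x) = l" by blast
  from g x(1) have "distinct (occs (fst (snd x))) \<and> set (occs (fst (snd x))) \<subseteq> A"
    unfolding good_def by (rule bspec)
  then show ?thesis using x(2) by simp
qed

lemma combine:
  assumes "good r A" "good s B" "A \<inter> B = {}"
    and "Some l = conc (lam r f t) (lam s f t)"
    and conc: "\<And>a b l. conc a b = Some l \<Longrightarrow>
       (\<exists>x y. a = Some x \<and> b = Some y \<and> occs l = occs x @ occs y)
       \<or> (a = Some l) \<or> (b = Some l)"
  shows "distinct (occs l) \<and> set (occs l) \<subseteq> A \<union> B"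
proof -
  from conc[OF assms(4)[symmetric]] consider
    (c) x y where "lam r f t = Some x" "lam s f t = Some y" "occs l = occs x @ occs y"
    | (a) "lam r f t = Some l" | (b) "lam s f t = Some l" by blast
  then show ?thesis
  proof cases
    case c
    have 1: "distinct (occs x)" "set (occs x) \<subseteq> A" using lam_good[OF assms(1) c(1)] by simp_all
    have 2: "distinct (occs y)" "set (occs y) \<subseteq> B" using lam_good[OF assms(2) c(2)] by simp_all
    have "set (occs x) \<inter> set (occs y) = {}" using 1(2) 2(2) assms(3) by blast
    then show ?thesis unfolding c(3) using 1 2 by (simp; blast)
  next
    case a then show ?thesis using lam_good[OF assms(1) a] by blast
  next
    case b then show ?thesis using lam_good[OF assms(2) b] by blast
  qed
qed

lemma or_ok: "l_or a b = Some l \<Longrightarrow>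
       (\<exists>x y. a = Some x \<and> b = Some y \<and> occs l = occs x @ occs y)
       \<or> (a = Some l) \<or> (b = Some l)"
  by (cases a; cases b) auto

lemma and_ok: "l_and a b = Some l \<Longrightarrow>
       (\<exists>x y. a = Some x \<and> b = Some y \<and> occs l = occs x @ occs y)
       \<or> (a = Some l) \<or> (b = Some l)"
  by (cases a; cases b) auto

lemma andNot_ok: "l_andNot a b = Some l \<Longrightarrow>
       (\<exists>x y. a = Some x \<and> b = Some y \<and> occs l = occs x @ occs y)
       \<or> (a = Some l) \<or> (b = Some l)"
  by (cases a; cases b) auto

lemma op_good:
  assumes "good r A" "good s B" "A \<inter> B = {}"
    and conc: "\<And>a b l. conc a b = Some l \<Longrightarrow>
       (\<exists>x y. a = Some x \<and> b = Some y \<and> occs l = occs x @ occs y)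
       \<or> (a = Some l) \<or> (b = Some l)"
  shows "good (tp_op nn conc r s) (A \<union> B)"
  unfolding good_def
proof
  fix x assume "x \<in> tp_op nn conc r s"
  from tp_op_pt[OF this] obtain t where "Some (fst (snd x)) = conc (lam r (fst x) t) (lam s (fst x) t)" by blast
  from combine[where conc=conc and r=r and s=s, OF assms(1-3) this conc] show "distinct (occs (fst (snd x))) \<and> set (occs (fst (snd x))) \<subseteq> A \<union> B" .
qed

lemma disj:
  assumes ids: "\<And>i j x y. i \<in> {1..m} \<Longrightarrow> j \<in> {1..m} \<Longrightarrow> x \<in> R i \<Longrightarrow> y \<in> R j \<Longrightarrow>
               b_id x = b_id y \<Longrightarrow> i = j \<and> x = y"
    and "set (rels Q1) \<subseteq> {1..m}" "set (rels Q2) \<subseteq> {1..m}" "set (rels Q1) \<inter> set (rels Q2) = {}"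
  shows "I R Q1 \<inter> I R Q2 = {}"
proof (rule ccontr)
  assume "I R Q1 \<inter> I R Q2 \<noteq> {}"
  then obtain a where a1: "a \<in> I R Q1" and a2: "a \<in> I R Q2" by blast
  from a1 obtain i x where h1: "i \<in> set (rels Q1)" "x \<in> R i" "a = b_id x"
    unfolding I_def by blast
  from a2 obtain j y where h2: "j \<in> set (rels Q2)" "y \<in> R j" "a = b_id y"
    unfolding I_def by blast
  have i: "i \<in> {1..m}" using assms(2) h1(1) by blast
  have j: "j \<in> {1..m}" using assms(3) h2(1) by blast
  have "i = j" using ids[OF i j h1(2) h2(2)] h1(3) h2(3) by simp
  then show False using h1(1) h2(1) assms(4) by blast
qed

lemma main:
  assumes ids: "\<And>i j x y. i \<in> {1..m} \<Longrightarrow> j \<in> {1..m} \<Longrightarrow> x \<in> R i \<Longrightarrow> y \<in> R j \<Longrightarrow>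
               b_id x = b_id y \<Longrightarrow> i = j \<and> x = y"
  shows "set (rels Q) \<subseteq> {1..m} \<Longrightarrow> distinct (rels Q) \<Longrightarrow> good (eval R Q) (I R Q)"
proof (induction Q)
  case (Rel i)
  show ?case unfolding good_def
  proof
    fix y assume "y \<in> eval R (Rel i)"
    then obtain z where "y = (b_fact z, Var (b_id z), b_T z)" "z \<in> R i"
      by (auto simp: base_lin_def)
    then show "distinct (occs (fst (snd y))) \<and> set (occs (fst (snd y))) \<subseteq> I R (Rel i)"
      by (auto simp: I_def)
  qed
next
  case (QUnion Q1 Q2)
  have d: "I R Q1 \<inter> I R Q2 = {}" by (rule disj[OF ids]) (use QUnion.prems in auto)
  have IU: "I R (QUnion Q1 Q2) = I R Q1 \<union> I R Q2" unfolding I_def by auto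
  have g1: "good (eval R Q1) (I R Q1)" using QUnion.IH(1) QUnion.prems by simp
  have g2: "good (eval R Q2) (I R Q2)" using QUnion.IH(2) QUnion.prems by simp
  show ?case by (simp only: eval.simps tp_union_def IU) (rule op_good[OF g1 g2 d or_ok])
next
  case (QInter Q1 Q2)
  have d: "I R Q1 \<inter> I R Q2 = {}" by (rule disj[OF ids]) (use QInter.prems in auto)
  have IU: "I R (QInter Q1 Q2) = I R Q1 \<union> I R Q2" unfolding I_def by auto
  have g1: "good (eval R Q1) (I R Q1)" using QInter.IH(1) QInter.prems by simp
  have g2: "good (eval R Q2) (I R Q2)" using QInter.IH(2) QInter.prems by simp
  show ?case by (simp only: eval.simps tp_inter_def IU) (rule op_good[OF g1 g2 d and_ok])
next
  case (QDiff Q1 Q2)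
  have d: "I R Q1 \<inter> I R Q2 = {}" by (rule disj[OF ids]) (use QDiff.prems in auto)
  have IU: "I R (QDiff Q1 Q2) = I R Q1 \<union> I R Q2" unfolding I_def by auto
  have g1: "good (eval R Q1) (I R Q1)" using QDiff.IH(1) QDiff.prems by simp
  have g2: "good (eval R Q2) (I R Q2)" using QDiff.IH(2) QDiff.prems by simp
  show ?case by (simp only: eval.simps tp_diff_def IU) (rule op_good[OF g1 g2 d andNot_ok])
qed

theorem theorem1:
  fixes R :: "nat \<Rightarrow> ('i,'f) base_tuple set" and m :: nat and Q :: query
  assumes wf: "\<And>i. i \<in> {1..m} \<Longrightarrow> wf_base_rel (R i)"
    and dupfree: "\<And>i. i \<in> {1..m} \<Longrightarrow> duplicate_free (R i)"
    and ids: "\<And>i j x y. i \<in> {1..m} \<Longrightarrow> j \<in> {1..m} \<Longrightarrow> x \<in> R i \<Longrightarrow> y \<in> R j \<Longrightarrow>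
               b_id x = b_id y \<Longrightarrow> i = j \<and> x = y"
    and inQ: "set (rels Q) \<subseteq> {1..m}"
    and nonrep: "non_repeating Q"
    and res: "x \<in> eval R Q"
  shows "one_occurrence_form (fst (snd x))"
  using main[OF ids inQ nonrep[unfolded non_repeating_def]] res
  unfolding good_def one_occurrence_form_def by blast

end
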